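(* Let $M(n,h)=\frac{2n+2-2\lceil 2\sqrt{n+h}\,\rceil}{4}$. A polyomino with $n$ tiles and $h$ holes is efficiently structured if and only if $h=M(n,h)$.
   Context: A polyomino is a finite union of closed unit squares (tiles) of the square lattice, any two meeting (if at all) in a whole edge, whose interior is connected. Its holes are the bounded connected components of its complement in the plane; the area of a hole is the number of unit squares needed to fill it. The dual graph has a vertex per tile and an edge between tiles sharing an edge; the polyomino is acyclic if its dual graph is a tree. $p_o(A)$ is the number of unit edges on the boundary of $A$ not bounding a hole. A polyomino with $n$ tiles and $h$ holes has minimal outer perimeter if $p_o(A)=2\lceil 2\sqrt{n+h}\,\rceil$, and is efficiently structured if it is acyclic, each hole has area one, and it has minimal outer perimeter. *)

theory Defs
  imports Complex_Main
begin

text \<open>Cells of the square lattice: the cell (i,j) is the closed unit square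
  [i,i+1] x [j,j+1]. A polyomino is represented by its finite set of tiles.\<close>

type_synonym cell = "int \<times> int"

definition adj :: "cell \<Rightarrow> cell \<Rightarrow> bool" where
  "adj c d \<longleftrightarrow> \<bar>fst c - fst d\<bar> + \<bar>snd c - snd d\<bar> = 1"

definition adjrel :: "cell set \<Rightarrow> (cell \<times> cell) set" where
  "adjrel S = {(c, d). c \<in> S \<and> d \<in> S \<and> adj c d}"

text \<open>A polyomino: nonempty finite set of tiles with connected interior,
  i.e. whose dual graph is connected.\<close>
definition polyomino :: "cell set \<Rightarrow> bool" where
  "polyomino A \<longleftrightarrow> finite A \<and> A \<noteq> {} \<and>
     (\<forall>c\<in>A. \<forall>d\<in>A. (c, d) \<in> (adjrel A)\<^sup>*)"

definition comp :: "cell set \<Rightarrow> cell \<Rightarrow> cell set" where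
  "comp A c = {d. (c, d) \<in> (adjrel (- A))\<^sup>*}"

text \<open>Holes: bounded (= finite) connected components of the complement.
  The area of a hole is its number of cells.\<close>
definition holes :: "cell set \<Rightarrow> cell set set" where
  "holes A = {comp A c | c. c \<notin> A \<and> finite (comp A c)}"

text \<open>Outer perimeter: number of unit boundary edges (between a tile and a
  non-tile cell) whose non-tile side lies in the unbounded component.\<close>
definition outer_perimeter :: "cell set \<Rightarrow> nat" where
  "outer_perimeter A =
     card {(c, d). c \<in> A \<and> d \<notin> A \<and> adj c d \<and> infinite (comp A d)}"

definition acyclic_poly :: "cell set \<Rightarrow> bool" where
  "acyclic_poly A \<longleftrightarrow> \<not> (\<exists>vs. length vs \<ge> 3 \<and> distinct vs \<and> set vs \<subseteq> A \<and>
      (\<forall>i < length vs - 1. adj (vs ! i) (vs ! (i + 1))) \<and> adj (last vs) (hd vs))"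

definition min_outer_perimeter :: "cell set \<Rightarrow> bool" where
  "min_outer_perimeter A \<longleftrightarrow>
     int (outer_perimeter A) = 2 * \<lceil>2 * sqrt (real (card A + card (holes A)))\<rceil>"

definition efficiently_structured :: "cell set \<Rightarrow> bool" where
  "efficiently_structured A \<longleftrightarrow> acyclic_poly A \<and> (\<forall>H \<in> holes A. card H = 1) \<and>
     min_outer_perimeter A"

definition M :: "nat \<Rightarrow> nat \<Rightarrow> real" where
  "M n h = (2 * real n + 2 - 2 * real_of_int \<lceil>2 * sqrt (real (n + h))\<rceil>) / 4"

end

theory Submission
  imports Defs
begin


lemma adj_sym: "adj c d = adj d c"
  unfolding adj_def by (simp add: abs_minus_commute add.commute)

lemma adj_irrefl[simp]: "\<not> adj c c"
  unfolding adj_def by simp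

definition nbrs :: "cell \<Rightarrow> cell set" where
  "nbrs c = {(fst c + 1, snd c), (fst c - 1, snd c), (fst c, snd c + 1), (fst c, snd c - 1)}"

lemma adj_iff_nbrs: "adj c d \<longleftrightarrow> d \<in> nbrs c"
proof -
  obtain a b where c: "c = (a,b)" by (cases c)
  obtain x y where d: "d = (x,y)" by (cases d)
  show ?thesis unfolding c d adj_def nbrs_def by (auto simp: abs_if split: if_splits)
qed

lemma card_nbrs: "card (nbrs c) = 4"
  unfolding nbrs_def by auto

definition nb :: "cell set \<Rightarrow> (cell \<times> cell) set" where
  "nb S = {(c, d). c \<in> S \<and> d \<notin> S \<and> adj c d}"

lemma four_count:
  assumes "finite A"
  shows "4 * card A = card (adjrel A) + card (nb A)"
proof -
  have eq: "Sigma A nbrs = adjrel A \<union> nb A"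
    unfolding adjrel_def nb_def by (auto simp: adj_iff_nbrs)
  have fin: "finite (Sigma A nbrs)" using assms by (auto simp: nbrs_def)
  have "card (Sigma A nbrs) = (\<Sum>c\<in>A. card (nbrs c))"
    using assms by (subst card_SigmaI) (auto simp: nbrs_def)
  also have "\<dots> = 4 * card A" by (simp add: card_nbrs)
  finally have "card (adjrel A \<union> nb A) = 4 * card A" using eq by simp
  moreover have "adjrel A \<inter> nb A = {}" unfolding adjrel_def nb_def by auto
  moreover have "finite (adjrel A)" "finite (nb A)" using fin eq by (auto intro: finite_subset)
  ultimately show ?thesis by (simp add: card_Un_disjoint)
qed



lemma conn_edges:
  assumes fin: "finite A" and RA: "R \<subseteq> A \<times> A" and symR: "sym R" and r: "r \<in> A"
    and conn: "\<forall>x\<in>A. (r, x) \<in> R\<^sup>*"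
  shows "2 * (card A - 1) \<le> card R"
proof -
  define dist where "dist x = (LEAST k. (r, x) \<in> R ^^ k)" for x
  have par_ex: "\<exists>p. (p, x) \<in> R \<and> dist p < dist x" if x: "x \<in> A - {r}" for x
  proof -
    from conn x obtain k where "(r, x) \<in> R ^^ k" by (auto simp: rtrancl_power)
    hence dx: "(r, x) \<in> R ^^ dist x" unfolding dist_def by (rule LeastI)
    have "dist x \<noteq> 0"
    proof
      assume "dist x = 0"
      with dx x show False by simp
    qed
    then obtain j where j: "dist x = Suc j" by (cases "dist x") auto
    with dx obtain p where p1: "(r, p) \<in> R ^^ j" and p2: "(p, x) \<in> R" by auto
    have "dist p \<le> j" unfolding dist_def using p1 by (rule Least_le)
    with p2 j show ?thesis by auto
  qed
  define par where "par x = (SOME p. (p, x) \<in> R \<and> dist p < dist x)" for x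
  have par: "(par x, x) \<in> R \<and> dist (par x) < dist x" if "x \<in> A - {r}" for x
    unfolding par_def using someI_ex[OF par_ex[OF that]] .
  define P1 where "P1 = (\<lambda>x. (x, par x)) ` (A - {r})"
  define P2 where "P2 = (\<lambda>x. (par x, x)) ` (A - {r})"
  have c1: "card P1 = card A - 1" unfolding P1_def
    by (subst card_image) (auto simp: inj_on_def r fin)
  have c2: "card P2 = card A - 1" unfolding P2_def
    by (subst card_image) (auto simp: inj_on_def r fin)
  have s1: "P1 \<subseteq> R" unfolding P1_def using par symR by (auto dest: symD)
  have s2: "P2 \<subseteq> R" unfolding P2_def using par by auto
  have d: "P1 \<inter> P2 = {}"
  proof -
    { fix p assume p1: "p \<in> P1" and p2: "p \<in> P2"
      obtain x where x: "x \<in> A - {r}" "p = (x, par x)" using p1 unfolding P1_def by blast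
      obtain y where y: "y \<in> A - {r}" "p = (par y, y)" using p2 unfolding P2_def by blast
      have e: "x = par y" "par x = y" using x(2) y(2) by auto
      have "dist (par y) < dist y" "dist (par x) < dist x" using par x y by auto
      with e have False by auto }
    then show ?thesis by auto
  qed
  have finR: "finite R" using RA fin by (auto intro: finite_subset)
  have "card (P1 \<union> P2) \<le> card R" using s1 s2 finR by (auto intro: card_mono)
  moreover have "card (P1 \<union> P2) = card P1 + card P2"
    using d s1 s2 finR by (intro card_Un_disjoint) (auto intro: finite_subset)
  ultimately show ?thesis using c1 c2 by simp
qed

definition is_cycle :: "cell set \<Rightarrow> cell list \<Rightarrow> bool" where
  "is_cycle A vs \<longleftrightarrow> length vs \<ge> 3 \<and> distinct vs \<and> set vs \<subseteq> A \<and>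
      (\<forall>i < length vs - 1. adj (vs ! i) (vs ! (i + 1))) \<and> adj (last vs) (hd vs)"

lemma acyclic_poly_iff: "acyclic_poly A \<longleftrightarrow> \<not> (\<exists>vs. is_cycle A vs)"
  unfolding acyclic_poly_def is_cycle_def by blast

lemma sym_adjrel: "sym (adjrel S)"
  unfolding adjrel_def sym_def using adj_sym by auto

lemma cycle_edges:
  assumes "polyomino A" and cyc: "is_cycle A vs"
  shows "2 * card A \<le> card (adjrel A)"
proof -
  have fin: "finite A" and ne: "A \<noteq> {}" and conn: "\<forall>c\<in>A. \<forall>d\<in>A. (c, d) \<in> (adjrel A)\<^sup>*"
    using assms(1) unfolding polyomino_def by auto
  define L where "L = length vs"
  have L3: "L \<ge> 3" and dis: "distinct vs" and sA: "set vs \<subseteq> A"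
    and step: "\<forall>i < L - 1. adj (vs ! i) (vs ! (i + 1))" and cl: "adj (last vs) (hd vs)"
    using cyc unfolding is_cycle_def L_def by auto
  define u where "u = vs ! (L - 1)"
  define w where "w = vs ! 0"
  have vne: "vs \<noteq> []" using L3 L_def by auto
  have u: "u = last vs" unfolding u_def L_def using vne by (simp add: last_conv_nth)
  have w: "w = hd vs" unfolding w_def using vne by (simp add: hd_conv_nth)
  define R' where "R' = adjrel A - {(u, w), (w, u)}"
  have "u \<in> set vs" using L3 unfolding u_def L_def by (intro nth_mem) auto
  moreover have "w \<in> set vs" using L3 unfolding w_def L_def by (intro nth_mem) auto
  ultimately have uA: "u \<in> A" and wA: "w \<in> A" using sA by auto
  have uw: "(u, w) \<in> adjrel A" "(w, u) \<in> adjrel A" using cl uA wA adj_sym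
    unfolding u w adjrel_def by auto
  have ii: "L - 1 < length vs" "0 < length vs" using L3 L_def by auto
  have neq: "u \<noteq> w" using nth_eq_iff_index_eq[OF dis ii] L3 unfolding u_def w_def by simp
  have path: "(w, vs ! j) \<in> R'\<^sup>*" if "j < L" for j
    using that
  proof (induction j)
    case 0 then show ?case unfolding w_def by simp
  next
    case (Suc j)
    have e1: "vs ! j \<noteq> u" using nth_eq_iff_index_eq[OF dis, of j "L - 1"] Suc.prems unfolding u_def L_def by auto
    have e2: "vs ! j \<noteq> w \<or> vs ! Suc j \<noteq> u"
      using nth_eq_iff_index_eq[OF dis, of j 0] nth_eq_iff_index_eq[OF dis, of "Suc j" "L - 1"] Suc.prems L3 vne
      unfolding u_def w_def L_def by auto
    have "adj (vs ! j) (vs ! Suc j)" using step Suc.prems by auto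
    moreover have "vs ! j \<in> A" "vs ! Suc j \<in> A" using sA Suc.prems unfolding L_def by auto
    ultimately have "(vs ! j, vs ! Suc j) \<in> R'" using e1 e2 unfolding R'_def adjrel_def by auto
    with Suc show ?case by (meson Suc_lessD rtrancl.rtrancl_into_rtrancl)
  qed
  have "(w, u) \<in> R'\<^sup>*" using path[of "L - 1"] L3 unfolding u_def by simp
  moreover have symR': "sym R'" using sym_adjrel unfolding R'_def sym_def by blast
  ultimately have "(u, w) \<in> R'\<^sup>*" by (meson sym_rtrancl symD)
  have sub: "adjrel A \<subseteq> R'\<^sup>*"
  proof
    fix p assume p: "p \<in> adjrel A"
    show "p \<in> R'\<^sup>*"
    proof (cases "p \<in> {(u, w), (w, u)}")
      case True then show ?thesis using \<open>(u, w) \<in> R'\<^sup>*\<close> \<open>(w, u) \<in> R'\<^sup>*\<close> by auto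
    next
      case False then show ?thesis using p unfolding R'_def by auto
    qed
  qed
  have conn': "\<forall>x\<in>A. (w, x) \<in> R'\<^sup>*"
    using conn wA rtrancl_subset_rtrancl[OF sub] by blast
  have RA: "R' \<subseteq> A \<times> A" unfolding R'_def adjrel_def by auto
  have "2 * (card A - 1) \<le> card R'" by (rule conn_edges[OF fin RA symR' wA conn'])
  moreover have "card R' = card (adjrel A) - 2"
  proof -
    have "finite (adjrel A)" using fin by (auto intro: finite_subset[of _ "A \<times> A"] simp: adjrel_def)
    then show ?thesis unfolding R'_def using uw neq by (subst card_Diff_subset) auto
  qed
  moreover have "card A \<ge> 1" using fin ne by (simp add: Suc_leI card_gt_0_iff)
  moreover have "card (adjrel A) \<ge> 2"
  proof -
    have "finite (adjrel A)" using fin by (auto intro: finite_subset[of _ "A \<times> A"] simp: adjrel_def)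
    moreover have "{(u, w), (w, u)} \<subseteq> adjrel A" using uw by auto
    ultimately have "card {(u, w), (w, u)} \<le> card (adjrel A)" by (rule card_mono)
    then show ?thesis using neq by simp
  qed
  ultimately show ?thesis by linarith
qed



definition is_path :: "cell set \<Rightarrow> cell list \<Rightarrow> bool" where
  "is_path A xs \<longleftrightarrow> xs \<noteq> [] \<and> distinct xs \<and> set xs \<subseteq> A \<and>
      (\<forall>i < length xs - 1. adj (xs ! i) (xs ! (i + 1)))"

lemma acyclic_mono: "acyclic_poly A \<Longrightarrow> B \<subseteq> A \<Longrightarrow> acyclic_poly B"
  unfolding acyclic_poly_iff is_cycle_def by blast

lemma leaf_exists:
  assumes fin: "finite A" and ne: "A \<noteq> {}" and acyc: "acyclic_poly A"
  shows "\<exists>v\<in>A. card {w\<in>A. adj v w} \<le> 1"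
proof -
  obtain a where a: "a \<in> A" using ne by auto
  define P where "P m = (\<exists>xs. is_path A xs \<and> length xs = m)" for m
  have P1: "P 1" unfolding P_def is_path_def using a by (intro exI[of _ "[a]"]) auto
  have bnd: "\<forall>m. P m \<longrightarrow> m \<le> card A"
  proof (intro allI impI)
    fix m assume "P m"
    then obtain xs where "is_path A xs" "length xs = m" unfolding P_def by auto
    then show "m \<le> card A" unfolding is_path_def using fin
      by (metis card_mono distinct_card)
  qed
  obtain m where m: "P m" and mmax: "\<forall>y. P y \<longrightarrow> y \<le> m"
    using Nat.ex_has_greatest_nat[OF P1 bnd] by auto
  obtain xs where xs: "is_path A xs" and L: "length xs = m" using m unfolding P_def by auto
  have xne: "xs \<noteq> []" and dis: "distinct xs" and sA: "set xs \<subseteq> A"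
    and st: "\<forall>i < m - 1. adj (xs ! i) (xs ! (i + 1))" using xs L unfolding is_path_def by auto
  define v where "v = last xs"
  have vx: "v = xs ! (m - 1)" unfolding v_def using xne L by (simp add: last_conv_nth)
  have m1: "m \<ge> 1" using xne L by (cases xs) auto
  have vA: "v \<in> A" using sA xne unfolding v_def by auto
  have sub: "{w\<in>A. adj v w} \<subseteq> {xs ! (m - 2)}"
  proof
    fix w assume w: "w \<in> {w\<in>A. adj v w}"
    have wv: "w \<noteq> v" using w by auto
    have "w \<in> set xs"
    proof (rule ccontr)
      assume nw: "w \<notin> set xs"
      have "is_path A (xs @ [w])" unfolding is_path_def
      proof (intro conjI allI impI)
        show "distinct (xs @ [w])" using dis nw by simp
        show "set (xs @ [w]) \<subseteq> A" using sA w by auto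
        fix i assume i: "i < length (xs @ [w]) - 1"
        show "adj ((xs @ [w]) ! i) ((xs @ [w]) ! (i + 1))"
        proof (cases "i + 1 < m")
          case True then show ?thesis using st L by (simp add: nth_append)
        next
          case False
          then have "i = m - 1" using i L by simp
          then show ?thesis using w vx L m1 by (simp add: nth_append)
        qed
      qed simp
      then have "P (m + 1)" unfolding P_def using L by (intro exI[of _ "xs @ [w]"]) simp
      then show False using mmax by fastforce
    qed
    then obtain i where i: "i < m" and wi: "xs ! i = w" using L by (auto simp: in_set_conv_nth)
    have "i \<noteq> m - 1" using wi wv vx by auto
    moreover have "\<not> i < m - 2"
    proof
      assume i2: "i < m - 2"
      have "is_cycle A (drop i xs)" unfolding is_cycle_def
      proof (intro conjI allI impI)
        show "3 \<le> length (drop i xs)" using i2 L by simp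
        show "distinct (drop i xs)" using dis by simp
        show "set (drop i xs) \<subseteq> A" using sA set_drop_subset by fast
        fix j assume j: "j < length (drop i xs) - 1"
        then show "adj (drop i xs ! j) (drop i xs ! (j + 1))" using st L i
          by (simp add: add.assoc)
      next
        have "last (drop i xs) = v" unfolding v_def using i L by (simp add: last_drop)
        moreover have "hd (drop i xs) = w" using i L wi by (simp add: hd_drop_conv_nth)
        ultimately show "adj (last (drop i xs)) (hd (drop i xs))" using w by simp
      qed
      then show False using acyc unfolding acyclic_poly_iff by blast
    qed
    ultimately have "i = m - 2" using i by linarith
    then show "w \<in> {xs ! (m - 2)}" using wi by simp
  qed
  have "card {w\<in>A. adj v w} \<le> card {xs ! (m - 2)}" by (rule card_mono[OF _ sub]) simp
  then show ?thesis using vA by auto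
qed

lemma adjrel_remove:
  assumes fin: "finite A" and v: "v \<in> A"
  shows "card (adjrel A) = card (adjrel (A - {v})) + 2 * card {w\<in>A. adj v w}"
proof -
  define N where "N = {w\<in>A. adj v w}"
  have eq: "adjrel A = adjrel (A - {v}) \<union> ({v} \<times> N) \<union> (N \<times> {v})"
    unfolding adjrel_def N_def using v adj_sym by auto
  have finN: "finite N" using fin unfolding N_def by auto
  have finB: "finite (adjrel (A - {v}))" using fin
    by (auto intro: finite_subset[of _ "A \<times> A"] simp: adjrel_def)
  have vN: "v \<notin> N" unfolding N_def by auto
  have "card (adjrel A) = card (adjrel (A - {v})) + card ({v} \<times> N) + card (N \<times> {v})"
    unfolding eq using finN finB vN
    by (subst card_Un_disjoint, auto simp: adjrel_def)+
  then show ?thesis using N_def by (simp add: card_cartesian_product)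
qed

lemma acyc_edges:
  "finite A \<Longrightarrow> A \<noteq> {} \<Longrightarrow> acyclic_poly A \<Longrightarrow> card (adjrel A) \<le> 2 * (card A - 1)"
proof (induction "card A" arbitrary: A)
  case 0 then show ?case by simp
next
  case (Suc k)
  obtain v where v: "v \<in> A" and deg: "card {w\<in>A. adj v w} \<le> 1"
    using leaf_exists[OF Suc.prems] by auto
  show ?case
  proof (cases "A = {v}")
    case True
    then have "adjrel A = {}" unfolding adjrel_def by auto
    then show ?thesis by simp
  next
    case False
    then have ne: "A - {v} \<noteq> {}" using v by auto
    have ck: "k = card (A - {v})" using Suc.hyps(2) Suc.prems(1) v by simp
    have "card (adjrel (A - {v})) \<le> 2 * (card (A - {v}) - 1)"
      using Suc.hyps(1)[OF ck] Suc.prems ne acyclic_mono by blast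
    moreover have "card (A - {v}) \<ge> 1" using ne Suc.prems(1)
      by (simp add: Suc_leI card_gt_0_iff)
    ultimately show ?thesis using adjrel_remove[OF Suc.prems(1) v] deg ck Suc.hyps(2) by linarith
  qed
qed



lemma card_le_prod:
  assumes "finite S" shows "card S \<le> card (fst ` S) * card (snd ` S)"
proof -
  have "S \<subseteq> fst ` S \<times> snd ` S" by force
  then have "card S \<le> card (fst ` S \<times> snd ` S)" using assms by (intro card_mono) auto
  then show ?thesis by (simp add: card_cartesian_product)
qed

lemma finite_nb: "finite S \<Longrightarrow> finite (nb S)"
proof -
  assume f: "finite S"
  have "nb S \<subseteq> Sigma S nbrs" unfolding nb_def by (auto simp: adj_iff_nbrs)
  moreover have "finite (Sigma S nbrs)" using f by (auto simp: nbrs_def)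
  ultimately show ?thesis by (rule finite_subset)
qed

lemma bd_bound:
  assumes fin: "finite S"
  shows "2 * (card (fst ` S) + card (snd ` S)) \<le> card (nb S)"
proof -
  define row where "row y = {x. (x, y) \<in> S}" for y
  define col where "col x = {y. (x, y) \<in> S}" for x
  have frow: "finite (row y)" for y
  proof -
    have "row y \<subseteq> fst ` S" unfolding row_def by force
    then show ?thesis using fin by (auto intro: finite_subset)
  qed
  have fcol: "finite (col x)" for x
  proof -
    have "col x \<subseteq> snd ` S" unfolding col_def by force
    then show ?thesis using fin by (auto intro: finite_subset)
  qed
  have nrow: "row y \<noteq> {}" if "y \<in> snd ` S" for y using that unfolding row_def by force
  have ncol: "col x \<noteq> {}" if "x \<in> fst ` S" for x using that unfolding col_def by force
  define f1 where "f1 y = ((Max (row y), y), (Max (row y) + 1, y))" for y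
  define f2 where "f2 y = ((Min (row y), y), (Min (row y) - 1, y))" for y
  define g1 where "g1 x = ((x, Max (col x)), (x, Max (col x) + 1))" for x
  define g2 where "g2 x = ((x, Min (col x)), (x, Min (col x) - 1))" for x
  have "f1 y \<in> nb S" if "y \<in> snd ` S" for y
  proof -
    have "Max (row y) \<in> row y" using Max_in[OF frow nrow[OF that]] .
    moreover have "Max (row y) + 1 \<notin> row y" using Max_ge[OF frow, of "Max (row y) + 1" y] by auto
    ultimately show ?thesis unfolding f1_def nb_def row_def adj_def by auto
  qed
  moreover have "f2 y \<in> nb S" if "y \<in> snd ` S" for y
  proof -
    have "Min (row y) \<in> row y" using Min_in[OF frow nrow[OF that]] .
    moreover have "Min (row y) - 1 \<notin> row y" using Min_le[OF frow, of "Min (row y) - 1" y] by auto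
    ultimately show ?thesis unfolding f2_def nb_def row_def adj_def by auto
  qed
  moreover have "g1 x \<in> nb S" if "x \<in> fst ` S" for x
  proof -
    have "Max (col x) \<in> col x" using Max_in[OF fcol ncol[OF that]] .
    moreover have "Max (col x) + 1 \<notin> col x" using Max_ge[OF fcol, of "Max (col x) + 1" x] by auto
    ultimately show ?thesis unfolding g1_def nb_def col_def adj_def by auto
  qed
  moreover have "g2 x \<in> nb S" if "x \<in> fst ` S" for x
  proof -
    have "Min (col x) \<in> col x" using Min_in[OF fcol ncol[OF that]] .
    moreover have "Min (col x) - 1 \<notin> col x" using Min_le[OF fcol, of "Min (col x) - 1" x] by auto
    ultimately show ?thesis unfolding g2_def nb_def col_def adj_def by auto
  qed
  ultimately have sub: "f1 ` snd ` S \<union> f2 ` snd ` S \<union> g1 ` fst ` S \<union> g2 ` fst ` S \<subseteq> nb S"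
    by blast
  have i1: "inj f1" "inj f2" "inj g1" "inj g2" unfolding f1_def f2_def g1_def g2_def inj_def by auto
  have c1: "card (f1 ` snd ` S) = card (snd ` S)" using i1 by (simp add: card_image inj_on_subset)
  have c2: "card (f2 ` snd ` S) = card (snd ` S)" using i1 by (simp add: card_image inj_on_subset)
  have c3: "card (g1 ` fst ` S) = card (fst ` S)" using i1 by (simp add: card_image inj_on_subset)
  have c4: "card (g2 ` fst ` S) = card (fst ` S)" using i1 by (simp add: card_image inj_on_subset)
  have d12: "f1 ` snd ` S \<inter> f2 ` snd ` S = {}" unfolding f1_def f2_def by auto
  have d3: "(f1 ` snd ` S \<union> f2 ` snd ` S) \<inter> g1 ` fst ` S = {}" unfolding f1_def f2_def g1_def by auto
  have d4: "(f1 ` snd ` S \<union> f2 ` snd ` S \<union> g1 ` fst ` S) \<inter> g2 ` fst ` S = {}"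
    unfolding f1_def f2_def g1_def g2_def by auto
  have "card (f1 ` snd ` S \<union> f2 ` snd ` S \<union> g1 ` fst ` S \<union> g2 ` fst ` S)
      = card (snd ` S) + card (snd ` S) + card (fst ` S) + card (fst ` S)"
    using fin d12 d3 d4 c1 c2 c3 c4 by (simp add: card_Un_disjoint)
  moreover have "card (f1 ` snd ` S \<union> f2 ` snd ` S \<union> g1 ` fst ` S \<union> g2 ` fst ` S) \<le> card (nb S)"
    using sub finite_nb[OF fin] by (rule card_mono[rotated])
  ultimately show ?thesis by (simp only: mult_2)
qed

lemma perim_bound:
  assumes fin: "finite S" and m: "m \<le> card S"
  shows "2 * \<lceil>2 * sqrt (real m)\<rceil> \<le> int (card (nb S))"
proof -
  define a where "a = card (fst ` S)"
  define b where "b = card (snd ` S)"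
  have ab: "real m \<le> real a * real b" using card_le_prod[OF fin] m unfolding a_def b_def
    by (metis le_trans of_nat_le_iff of_nat_mult)
  have "0 \<le> (real a - real b)^2" by simp
  then have "4 * (real a * real b) \<le> (real a + real b)^2"
    by (simp add: power2_eq_square algebra_simps)
  with ab have "4 * real m \<le> (real a + real b)^2" by linarith
  then have "sqrt (4 * real m) \<le> sqrt ((real a + real b)^2)" by (rule real_sqrt_le_mono)
  then have "2 * sqrt (real m) \<le> real a + real b" by (simp add: real_sqrt_mult)
  then have "\<lceil>2 * sqrt (real m)\<rceil> \<le> int (a + b)" by (simp add: ceiling_le_iff)
  then have c: "2 * \<lceil>2 * sqrt (real m)\<rceil> \<le> 2 * int (a + b)" by simp
  moreover have "2 * (a + b) \<le> card (nb S)" using bd_bound[OF fin] unfolding a_def b_def .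
  then have "2 * int (a + b) \<le> int (card (nb S))" by linarith
  ultimately show ?thesis by (rule order_trans)
qed



lemma comp_self: "c \<notin> A \<Longrightarrow> c \<in> comp A c"
  unfolding comp_def by simp

lemma comp_notin: assumes "x \<in> comp A c" "c \<notin> A" shows "x \<notin> A"
proof -
  have "(c, x) \<in> (adjrel (- A))\<^sup>*" using assms(1) unfolding comp_def by simp
  then show ?thesis
    by (induction rule: rtrancl_induct) (use assms(2) in \<open>auto simp: adjrel_def\<close>)
qed

lemma comp_eq: assumes "x \<in> comp A c" shows "comp A x = comp A c"
proof -
  have cx: "(c, x) \<in> (adjrel (- A))\<^sup>*" using assms unfolding comp_def by simp
  have xc: "(x, c) \<in> (adjrel (- A))\<^sup>*"
    using cx sym_rtrancl[OF sym_adjrel] by (meson symD)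
  show ?thesis unfolding comp_def using cx xc by (auto intro: rtrancl_trans)
qed

lemma comp_step:
  assumes "x \<in> comp A c" "x \<notin> A" "d \<notin> A" "adj x d"
  shows "d \<in> comp A c"
proof -
  have "(x, d) \<in> adjrel (- A)" using assms unfolding adjrel_def by auto
  then show ?thesis using assms(1) unfolding comp_def by (auto intro: rtrancl_into_rtrancl)
qed

lemma hole_props:
  assumes "H \<in> holes A"
  shows "finite H" "H \<noteq> {}" "H \<inter> A = {}" "\<And>d. d \<in> H \<Longrightarrow> comp A d = H"
proof -
  obtain c where c: "c \<notin> A" "finite (comp A c)" "H = comp A c"
    using assms unfolding holes_def by auto
  show "finite H" using c by simp
  show "H \<noteq> {}" using c comp_self[OF c(1)] by auto
  show "H \<inter> A = {}"
  proof (rule ccontr)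
    assume "H \<inter> A \<noteq> {}"
    then obtain x where "x \<in> H" "x \<in> A" by blast
    then show False using c comp_notin[of x A c] by blast
  qed
  show "\<And>d. d \<in> H \<Longrightarrow> comp A d = H" using c comp_eq by auto
qed

lemma holes_disj:
  assumes "H1 \<in> holes A" "H2 \<in> holes A" "H1 \<noteq> H2" shows "H1 \<inter> H2 = {}"
proof (rule ccontr)
  assume "H1 \<inter> H2 \<noteq> {}"
  then obtain x where x1: "x \<in> H1" and x2: "x \<in> H2" by auto
  have "comp A x = H1" by (rule hole_props(4)[OF assms(1) x1])
  moreover have "comp A x = H2" by (rule hole_props(4)[OF assms(2) x2])
  ultimately show False using assms(3) by simp
qed

definition ph :: "cell set \<Rightarrow> cell set \<Rightarrow> (cell \<times> cell) set" where
  "ph A H = {(c, d). c \<in> A \<and> d \<in> H \<and> adj c d}"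

lemma ph_eq:
  assumes H: "H \<in> holes A"
  shows "ph A H = (\<lambda>(d, c). (c, d)) ` nb H"
proof
  show "ph A H \<subseteq> (\<lambda>(d, c). (c, d)) ` nb H"
  proof
    fix p assume "p \<in> ph A H"
    then obtain c d where p: "p = (c, d)" "c \<in> A" "d \<in> H" "adj c d" unfolding ph_def by auto
    have "c \<notin> H" using hole_props(3)[OF H] p by auto
    then have "(d, c) \<in> nb H" using p adj_sym unfolding nb_def by auto
    then show "p \<in> (\<lambda>(d, c). (c, d)) ` nb H" using p by force
  qed
next
  show "(\<lambda>(d, c). (c, d)) ` nb H \<subseteq> ph A H"
  proof
    fix p assume "p \<in> (\<lambda>(d, c). (c, d)) ` nb H"
    then obtain c d where p: "p = (c, d)" "d \<in> H" "c \<notin> H" "adj d c" unfolding nb_def by auto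
    have "c \<in> A"
    proof (rule ccontr)
      assume cA: "c \<notin> A"
      have dA: "d \<notin> A" using hole_props(3)[OF H] p(2) by blast
      have dH1: "d \<in> comp A d" by (rule comp_self[OF dA])
      have "c \<in> comp A d" by (rule comp_step[OF dH1 dA cA p(4)])
      then show False using hole_props(4)[OF H p(2)] p(3) by simp
    qed
    then show "p \<in> ph A H" using p adj_sym unfolding ph_def by auto
  qed
qed

lemma card_ph: "H \<in> holes A \<Longrightarrow> card (ph A H) = card (nb H)"
proof -
  assume H: "H \<in> holes A"
  have "inj_on (\<lambda>(d, c). (c, d)) (nb H)" by (auto simp: inj_on_def)
  then show ?thesis using ph_eq[OF H] by (simp add: card_image)
qed

lemma nb_single: "card (nb {x}) = 4"
proof -
  have "x \<notin> nbrs x" using adj_irrefl[of x] adj_iff_nbrs by blast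
  then have "nb {x} = {x} \<times> nbrs x" unfolding nb_def by (auto simp: adj_iff_nbrs)
  then show ?thesis by (simp add: card_cartesian_product card_nbrs)
qed

lemma hole_card:
  assumes fin: "finite H" and ne: "H \<noteq> {}"
  shows "card (nb H) \<ge> 4" "card (nb H) = 4 \<longleftrightarrow> card H = 1"
proof -
  have a: "card (fst ` H) \<ge> 1" "card (snd ` H) \<ge> 1" using fin ne
    by (simp_all add: Suc_leI card_gt_0_iff)
  show "card (nb H) \<ge> 4" using bd_bound[OF fin] a by (simp add: distrib_left)
  show "card (nb H) = 4 \<longleftrightarrow> card H = 1"
  proof
    assume c: "card (nb H) = 4"
    show "card H = 1"
    proof (rule ccontr)
      assume "card H \<noteq> 1"
      moreover have "card H > 0" using fin ne by (simp add: card_gt_0_iff)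
      ultimately have "card H \<ge> 2" by linarith
      then have "card (fst ` H) * card (snd ` H) \<ge> 2" using card_le_prod[OF fin] by linarith
      then have "card (fst ` H) \<ge> 2 \<or> card (snd ` H) \<ge> 2"
      proof (rule contrapos_pp)
        assume "\<not> (card (fst ` H) \<ge> 2 \<or> card (snd ` H) \<ge> 2)"
        then have "card (fst ` H) = 1" "card (snd ` H) = 1" using a by auto
        then show "\<not> card (fst ` H) * card (snd ` H) \<ge> 2" by simp
      qed
      then show False using bd_bound[OF fin] a c by (simp add: distrib_left)
    qed
  next
    assume "card H = 1"
    then obtain x where "H = {x}" by (auto simp: card_Suc_eq)
    then show "card (nb H) = 4" by (simp add: nb_single)
  qed
qed



lemma comp_in_holes: "d \<notin> A \<Longrightarrow> finite (comp A d) \<Longrightarrow> comp A d \<in> holes A"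
  unfolding holes_def by blast

lemma hole_meets:
  assumes H: "H \<in> holes A"
  shows "\<exists>d\<in>H. d \<in> (\<Union>c\<in>A. nbrs c)"
proof -
  have "card (nb H) \<ge> 4" using hole_card(1)[OF hole_props(1,2)[OF H]] .
  then have "nb H \<noteq> {}" by auto
  then obtain p where "p \<in> nb H" by blast
  then have "(\<lambda>(d, c). (c, d)) p \<in> ph A H" using ph_eq[OF H] by blast
  then obtain c d where "c \<in> A" "d \<in> H" "adj c d" unfolding ph_def by (cases p) auto
  then show ?thesis by (auto simp: adj_iff_nbrs)
qed

lemma finite_holes:
  assumes fin: "finite A" shows "finite (holes A)"
proof -
  define NB where "NB = (\<Union>c\<in>A. nbrs c)"
  have finNB: "finite NB" unfolding NB_def using fin by (auto simp: nbrs_def)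
  define f where "f H = (SOME d. d \<in> H \<and> d \<in> NB)" for H
  have f: "f H \<in> H \<and> f H \<in> NB" if "H \<in> holes A" for H
    unfolding f_def using hole_meets[OF that] NB_def by (metis (mono_tags, lifting) someI_ex)
  have inj: "inj_on f (holes A)"
  proof (rule inj_onI)
    fix H1 H2 assume h1: "H1 \<in> holes A" and h2: "H2 \<in> holes A" and e: "f H1 = f H2"
    show "H1 = H2"
    proof (rule ccontr)
      assume "H1 \<noteq> H2"
      then have "H1 \<inter> H2 = {}" using holes_disj[OF h1 h2] by simp
      moreover have "f H1 \<in> H1" "f H1 \<in> H2" using f[OF h1] f[OF h2] e by auto
      ultimately show False by blast
    qed
  qed
  have "f ` holes A \<subseteq> NB" using f by blast
  then have "finite (f ` holes A)" using finNB by (rule finite_subset)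
  then show ?thesis using inj by (rule finite_imageD)
qed

definition OP :: "cell set \<Rightarrow> (cell \<times> cell) set" where
  "OP A = {(c, d). c \<in> A \<and> d \<notin> A \<and> adj c d \<and> infinite (comp A d)}"

lemma op_card: "outer_perimeter A = card (OP A)"
  unfolding outer_perimeter_def OP_def by simp

lemma nb_decomp:
  assumes fin: "finite A"
  shows "card (nb A) = outer_perimeter A + (\<Sum>H\<in>holes A. card (nb H))"
proof -
  define U where "U = (\<Union>H\<in>holes A. ph A H)"
  have eq: "nb A = OP A \<union> U"
  proof
    show "nb A \<subseteq> OP A \<union> U"
    proof
      fix p assume "p \<in> nb A"
      then obtain c d where p: "p = (c, d)" "c \<in> A" "d \<notin> A" "adj c d" unfolding nb_def by auto
      show "p \<in> OP A \<union> U"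
      proof (cases "finite (comp A d)")
        case True
        then have "comp A d \<in> holes A" using p(3) comp_in_holes by blast
        moreover have "p \<in> ph A (comp A d)" using p comp_self[OF p(3)] unfolding ph_def by auto
        ultimately show ?thesis unfolding U_def by blast
      next
        case False then show ?thesis using p unfolding OP_def by auto
      qed
    qed
  next
    show "OP A \<union> U \<subseteq> nb A"
    proof
      fix p assume "p \<in> OP A \<union> U"
      then show "p \<in> nb A"
      proof
        assume "p \<in> OP A" then show ?thesis unfolding OP_def nb_def by auto
      next
        assume "p \<in> U"
        then obtain H where H: "H \<in> holes A" and pH: "p \<in> ph A H" unfolding U_def by auto
        obtain c d where p: "p = (c, d)" "c \<in> A" "d \<in> H" "adj c d" using pH unfolding ph_def by auto
        have "d \<notin> A" using hole_props(3)[OF H] p(3) by blast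
        then show ?thesis using p unfolding nb_def by auto
      qed
    qed
  qed
  have disj: "OP A \<inter> U = {}"
  proof (rule ccontr)
    assume "OP A \<inter> U \<noteq> {}"
    then obtain p where p1: "p \<in> OP A" and p2: "p \<in> U" by blast
    obtain H where H: "H \<in> holes A" and pH: "p \<in> ph A H" using p2 unfolding U_def by auto
    obtain c d where p: "p = (c, d)" "d \<in> H" using pH unfolding ph_def by auto
    have "comp A d = H" using hole_props(4)[OF H p(2)] .
    then have "finite (comp A d)" using hole_props(1)[OF H] by simp
    then show False using p1 p unfolding OP_def by auto
  qed
  have finnb: "finite (nb A)" using finite_nb[OF fin] .
  have fH: "finite (holes A)" using finite_holes[OF fin] .
  have cU: "card U = (\<Sum>H\<in>holes A. card (ph A H))" unfolding U_def
  proof (rule card_UN_disjoint[OF fH])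
    show "\<forall>H\<in>holes A. finite (ph A H)"
      using finite_nb hole_props(1) ph_eq by (metis finite_imageI)
    show "\<forall>i\<in>holes A. \<forall>j\<in>holes A. i \<noteq> j \<longrightarrow> ph A i \<inter> ph A j = {}"
      using holes_disj unfolding ph_def by blast
  qed
  have "card (nb A) = card (OP A) + card U"
    using eq disj finnb by (simp add: card_Un_disjoint)
  moreover have "(\<Sum>H\<in>holes A. card (ph A H)) = (\<Sum>H\<in>holes A. card (nb H))"
    by (rule sum.cong) (simp_all add: card_ph)
  ultimately show ?thesis using cU op_card by simp
qed

lemma outer_bound:
  assumes fin: "finite A"
  shows "2 * \<lceil>2 * sqrt (real (card A + card (holes A)))\<rceil> \<le> int (outer_perimeter A)"
proof -
  define F where "F = A \<union> \<Union>(holes A)"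
  have fH: "finite (holes A)" using finite_holes[OF fin] .
  have finU: "finite (\<Union>(holes A))" using fH hole_props(1) by blast
  have finF: "finite F" unfolding F_def using fin finU by simp
  have nbF: "nb F = OP A"
  proof
    show "nb F \<subseteq> OP A"
    proof
      fix p assume "p \<in> nb F"
      then obtain c d where p: "p = (c, d)" "c \<in> F" "d \<notin> F" "adj c d" unfolding nb_def by auto
      have dA: "d \<notin> A" using p(3) unfolding F_def by blast
      have cA: "c \<in> A"
      proof (rule ccontr)
        assume "c \<notin> A"
        then obtain H where H: "H \<in> holes A" and cH: "c \<in> H" using p(2) unfolding F_def by blast
        have cc: "comp A c = H" using hole_props(4)[OF H cH] .
        have cA': "c \<notin> A" using hole_props(3)[OF H] cH by blast
        have "d \<in> comp A c" by (rule comp_step[OF comp_self[OF cA'] cA' dA p(4)])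
        then have "d \<in> F" using cc H unfolding F_def by blast
        then show False using p(3) by simp
      qed
      have inf: "infinite (comp A d)"
      proof
        assume "finite (comp A d)"
        then have "comp A d \<in> holes A" using dA comp_in_holes by blast
        then have "d \<in> F" using comp_self[OF dA] unfolding F_def by blast
        then show False using p(3) by simp
      qed
      show "p \<in> OP A" using p cA dA inf unfolding OP_def by auto
    qed
  next
    show "OP A \<subseteq> nb F"
    proof
      fix p assume "p \<in> OP A"
      then obtain c d where p: "p = (c, d)" "c \<in> A" "d \<notin> A" "adj c d" "infinite (comp A d)"
        unfolding OP_def by auto
      have "d \<notin> \<Union>(holes A)"
      proof
        assume "d \<in> \<Union>(holes A)"
        then obtain H where H: "H \<in> holes A" and dH: "d \<in> H" by blast
        then have "comp A d = H" using hole_props(4) by blast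
        then show False using hole_props(1)[OF H] p(5) by simp
      qed
      then show "p \<in> nb F" using p unfolding nb_def F_def by auto
    qed
  qed
  have dAU: "A \<inter> \<Union>(holes A) = {}" using hole_props(3) by blast
  have "card F = card A + card (\<Union>(holes A))" unfolding F_def using fin finU dAU
    by (simp add: card_Un_disjoint)
  moreover have "card (\<Union>(holes A)) = (\<Sum>H\<in>holes A. card H)"
    using card_UN_disjoint[OF fH, of "\<lambda>H. H"] hole_props(1) holes_disj by simp
  moreover have "(\<Sum>H\<in>holes A. (1::nat)) \<le> (\<Sum>H\<in>holes A. card H)"
  proof (rule sum_mono)
    fix H assume H: "H \<in> holes A"
    show "1 \<le> card H" using hole_props(1,2)[OF H] by (simp add: Suc_leI card_gt_0_iff)
  qed
  ultimately have "card A + card (holes A) \<le> card F" by simp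
  from perim_bound[OF finF this] show ?thesis using nbF op_card by simp
qed



lemma holes_sum:
  assumes fin: "finite A"
  shows "4 * card (holes A) \<le> (\<Sum>H\<in>holes A. card (nb H))"
    and "(\<Sum>H\<in>holes A. card (nb H)) = 4 * card (holes A) \<longleftrightarrow> (\<forall>H\<in>holes A. card H = 1)"
proof -
  have fH: "finite (holes A)" using finite_holes[OF fin] .
  have ge: "4 \<le> card (nb H)" if "H \<in> holes A" for H
    using hole_card(1)[OF hole_props(1,2)[OF that]] .
  have s4: "(\<Sum>H\<in>holes A. (4::nat)) = 4 * card (holes A)" by simp
  show "4 * card (holes A) \<le> (\<Sum>H\<in>holes A. card (nb H))"
    using sum_mono[of "holes A" "\<lambda>_. 4::nat" "\<lambda>H. card (nb H)"] ge s4 by simp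
  show "(\<Sum>H\<in>holes A. card (nb H)) = 4 * card (holes A) \<longleftrightarrow> (\<forall>H\<in>holes A. card H = 1)"
  proof
    assume e: "(\<Sum>H\<in>holes A. card (nb H)) = 4 * card (holes A)"
    show "\<forall>H\<in>holes A. card H = 1"
    proof (rule ccontr)
      assume "\<not> (\<forall>H\<in>holes A. card H = 1)"
      then obtain H where H: "H \<in> holes A" "card H \<noteq> 1" by blast
      then have "card (nb H) \<noteq> 4" using hole_card(2)[OF hole_props(1,2)[OF H(1)]] by simp
      then have "4 < card (nb H)" using ge[OF H(1)] by simp
      then have "(\<Sum>H\<in>holes A. (4::nat)) < (\<Sum>H\<in>holes A. card (nb H))"
        using sum_strict_mono_ex1[OF fH, of "\<lambda>_. 4::nat" "\<lambda>H. card (nb H)"] ge H(1) by blast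
      then show False using e s4 by simp
    qed
  next
    assume a: "\<forall>H\<in>holes A. card H = 1"
    have "(\<Sum>H\<in>holes A. card (nb H)) = (\<Sum>H\<in>holes A. (4::nat))"
    proof (rule sum.cong)
      fix H assume H: "H \<in> holes A"
      show "card (nb H) = 4" using hole_card(2)[OF hole_props(1,2)[OF H]] a H by simp
    qed simp
    then show "(\<Sum>H\<in>holes A. card (nb H)) = 4 * card (holes A)" using s4 by simp
  qed
qed

lemma div4_iff: "(x::real) = y / 4 \<longleftrightarrow> 4 * x = y"
  by (auto simp: field_simps)

theorem lemma3:
  fixes A :: "cell set"
  assumes "polyomino A"
  shows "efficiently_structured A \<longleftrightarrow>
           real (card (holes A)) = M (card A) (card (holes A))"
proof -
  have fin: "finite A" and ne: "A \<noteq> {}" and conn: "\<forall>c\<in>A. \<forall>d\<in>A. (c, d) \<in> (adjrel A)\<^sup>*"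
    using assms unfolding polyomino_def by auto
  define n where "n = card A"
  define h where "h = card (holes A)"
  define E where "E = card (adjrel A)"
  define Po where "Po = outer_perimeter A"
  define S where "S = (\<Sum>H\<in>holes A. card (nb H))"
  define c where "c = \<lceil>2 * sqrt (real (n + h))\<rceil>"
  have n1: "n \<ge> 1" using fin ne unfolding n_def by (simp add: Suc_leI card_gt_0_iff)
  have tot: "4 * n = E + Po + S"
    using four_count[OF fin] nb_decomp[OF fin] unfolding n_def E_def Po_def S_def by simp
  obtain r where r: "r \<in> A" using ne by auto
  have Ege: "2 * (n - 1) \<le> E" unfolding n_def E_def
    by (rule conn_edges[OF fin _ sym_adjrel r]) (use conn r in \<open>auto simp: adjrel_def\<close>)
  have Sge: "4 * h \<le> S" using holes_sum(1)[OF fin] unfolding S_def h_def .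
  have Seq: "S = 4 * h \<longleftrightarrow> (\<forall>H\<in>holes A. card H = 1)" using holes_sum(2)[OF fin] unfolding S_def h_def .
  have Poge: "2 * c \<le> int Po" using outer_bound[OF fin] unfolding c_def Po_def n_def h_def .
  have Meq: "real h = M n h \<longleftrightarrow> 4 * int h = 2 * int n + 2 - 2 * c"
  proof -
    have "real h = M n h \<longleftrightarrow> 4 * real h = 2 * real n + 2 - 2 * real_of_int c"
      unfolding M_def c_def by (rule div4_iff)
    also have "\<dots> \<longleftrightarrow> real_of_int (4 * int h) = real_of_int (2 * int n + 2 - 2 * c)" by simp
    also have "\<dots> \<longleftrightarrow> 4 * int h = 2 * int n + 2 - 2 * c" by (rule of_int_eq_iff)
    finally show ?thesis .
  qed
  have minop: "min_outer_perimeter A \<longleftrightarrow> int Po = 2 * c"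
    unfolding min_outer_perimeter_def Po_def c_def n_def h_def by simp
  have itot: "4 * int n = int E + int Po + int S" using tot by linarith
  have iEge: "2 * int n - 2 \<le> int E" using Ege n1 by linarith
  have iSge: "4 * int h \<le> int S" using Sge by linarith
  show ?thesis
  proof
    assume es: "efficiently_structured A"
    have "E \<le> 2 * (n - 1)" using acyc_edges[OF fin ne] es
      unfolding efficiently_structured_def E_def n_def by blast
    then have "int E = 2 * int n - 2" using Ege n1 by linarith
    moreover have "int S = 4 * int h" using es Seq unfolding efficiently_structured_def by simp
    moreover have "int Po = 2 * c" using es minop unfolding efficiently_structured_def by simp
    ultimately have "4 * int h = 2 * int n + 2 - 2 * c" using itot by linarith
    then show "real (card (holes A)) = M (card A) (card (holes A))"
      using Meq unfolding n_def h_def by simp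
  next
    assume "real (card (holes A)) = M (card A) (card (holes A))"
    then have m: "4 * int h = 2 * int n + 2 - 2 * c" using Meq unfolding n_def h_def by simp
    have e1: "int E = 2 * int n - 2" using itot m iEge iSge Poge by linarith
    have e2: "int S = 4 * int h" using itot m iEge iSge Poge by linarith
    have e3: "int Po = 2 * c" using itot m iEge iSge Poge by linarith
    have "acyclic_poly A"
    proof (rule ccontr)
      assume "\<not> acyclic_poly A"
      then obtain vs where "is_cycle A vs" unfolding acyclic_poly_iff by blast
      then have "2 * n \<le> E" using cycle_edges[OF assms] unfolding n_def E_def by blast
      then show False using e1 by linarith
    qed
    moreover have "\<forall>H\<in>holes A. card H = 1" using Seq e2 by simp
    moreover have "min_outer_perimeter A" using minop e3 by simp
    ultimately show "efficiently_structured A" unfolding efficiently_structured_def by simp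
  qed
qed

end
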